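(* Let $J=[0,+\infty)$ and let $A\colon J\to\mathcal{L}(\mathbb{R}^n)$ be of locally bounded variation on $J$ such that $I-\Delta^{-}A(t)$ is invertible for all $t\in(0,+\infty)$ and $I+\Delta^{+}A(t)$ is invertible for all $t\in J$. Let $U$ be the transition matrix of $\frac{dx}{d\tau}=D[A(t)x]$. Then the trivial solution of this equation is globally asymptotically stable if and only if for every $s_0\in J$, $\|U(t,s_0)\|\to 0$ as $t\to+\infty$.
   Context: Here $\Delta^{+}A(t)=A(t^+)-A(t)$, $\Delta^{-}A(t)=A(t)-A(t^-)$. Integrals $\int_a^b \mathrm{d}[A(s)]x(s)$ are Perron–Stieltjes (Kurzweil–Stieltjes) integrals. A solution of $\frac{dx}{d\tau}=D[A(t)x]$ is a function $x$ with $x(b)-x(a)=\int_a^b\mathrm{d}[A(s)]x(s)$ for all $a,b$ in its interval of definition. The transition matrix $U\colon J\times J\to\mathcal{L}(\mathbb{R}^n)$ is the unique matrix function with $U(t,s)=I+\int_s^t\mathrm{d}[A(r)]U(r,s)$; the unique solution with $x(s_0)=x_0$ is $x(t,s_0,x_0)=U(t,s_0)x_0$ for $t\ge s_0$. The trivial solution is stable if for every $s_0\ge0$ and $\varepsilon>0$ there is $\delta=\delta(s_0,\varepsilon)>0$ such that $\|x_0\|<\delta$ implies $\|x(t,s_0,x_0)\|<\varepsilon$ for all $t\ge s_0$. It is globally asymptotically stable if it is stable and for every $s_0\ge 0$ and every $x_0\in\mathbb{R}^n$, $\|x(t,s_0,x_0)\|\to0$ as $t\to+\infty$. *)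

theory Defs
  imports "HOL-Analysis.Analysis"
begin

text \<open>Matrices in L(R^n) are rendered as real^'n^'n; the product d[A] x is matrix product.\<close>

text \<open>Kurzweil--Stieltjes (Perron--Stieltjes) integral of d[A(s)] F(s) over [a,b], a \<le> b:
  limit of Riemann--Stieltjes sums over gauge-fine tagged divisions.\<close>
definition ks_has_integral_on ::
  "(real \<Rightarrow> real^'n^'n) \<Rightarrow> (real \<Rightarrow> real^'n^'n) \<Rightarrow> real^'n^'n \<Rightarrow> real \<Rightarrow> real \<Rightarrow> bool" where
  "ks_has_integral_on A F I a b \<longleftrightarrow>
     (\<forall>e>0. \<exists>\<gamma>. gauge \<gamma> \<and>
        (\<forall>p. p tagged_division_of {a..b} \<and> \<gamma> fine p \<longrightarrow>
             norm ((\<Sum>(x,K)\<in>p. (A (Sup K) - A (Inf K)) ** F x) - I) < e))"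

text \<open>Oriented integral: \<open>\<integral>_a^b = - \<integral>_b^a\<close> when b < a.\<close>
definition ks_has_integral ::
  "(real \<Rightarrow> real^'n^'n) \<Rightarrow> (real \<Rightarrow> real^'n^'n) \<Rightarrow> real^'n^'n \<Rightarrow> real \<Rightarrow> real \<Rightarrow> bool" where
  "ks_has_integral A F I a b \<longleftrightarrow>
     (if a \<le> b then ks_has_integral_on A F I a b else ks_has_integral_on A F (- I) b a)"

text \<open>Bounded variation of a matrix function on [a,b] and local bounded variation on J=[0,\<infinity>).\<close>
definition bv_on :: "(real \<Rightarrow> 'a::real_normed_vector) \<Rightarrow> real \<Rightarrow> real \<Rightarrow> bool" where
  "bv_on A a b \<longleftrightarrow> (\<exists>B. \<forall>d. d division_of {a..b} \<longrightarrow>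
       (\<Sum>K\<in>d. norm (A (Sup K) - A (Inf K))) \<le> B)"

definition loc_bv_J :: "(real \<Rightarrow> 'a::real_normed_vector) \<Rightarrow> bool" where
  "loc_bv_J A \<longleftrightarrow> (\<forall>b\<ge>0. bv_on A 0 b)"

text \<open>One-sided jumps.\<close>
definition jump_plus :: "(real \<Rightarrow> 'a::real_normed_vector) \<Rightarrow> real \<Rightarrow> 'a" where
  "jump_plus A t = Lim (at_right t) A - A t"

definition jump_minus :: "(real \<Rightarrow> 'a::real_normed_vector) \<Rightarrow> real \<Rightarrow> 'a" where
  "jump_minus A t = A t - Lim (at_left t) A"

text \<open>Transition matrix: U(t,s) = I + \<integral>_s^t d[A(r)] U(r,s) for all t, s in J.\<close>
definition transition_matrix ::
  "(real \<Rightarrow> real^'n^'n) \<Rightarrow> (real \<Rightarrow> real \<Rightarrow> real^'n^'n) \<Rightarrow> bool" where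
  "transition_matrix A U \<longleftrightarrow>
     (\<forall>t\<ge>0. \<forall>s\<ge>0. ks_has_integral A (\<lambda>r. U r s) (U t s - mat 1) s t)"

text \<open>The solution through (s0,x0): x(t,s0,x0) = U(t,s0) x0 (t \<ge> s0).\<close>
definition sol :: "(real \<Rightarrow> real \<Rightarrow> real^'n^'n) \<Rightarrow> real \<Rightarrow> real \<Rightarrow> real^'n \<Rightarrow> real^'n" where
  "sol U t s0 x0 = U t s0 *v x0"

definition trivial_stable :: "(real \<Rightarrow> real \<Rightarrow> real^'n^'n) \<Rightarrow> bool" where
  "trivial_stable U \<longleftrightarrow>
     (\<forall>s0\<ge>0. \<forall>\<epsilon>>0. \<exists>\<delta>>0. \<forall>x0. norm x0 < \<delta> \<longrightarrow> (\<forall>t\<ge>s0. norm (sol U t s0 x0) < \<epsilon>))"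

definition trivial_GAS :: "(real \<Rightarrow> real \<Rightarrow> real^'n^'n) \<Rightarrow> bool" where
  "trivial_GAS U \<longleftrightarrow> trivial_stable U \<and>
     (\<forall>s0\<ge>0. \<forall>x0. ((\<lambda>t. norm (sol U t s0 x0)) \<longlongrightarrow> 0) at_top)"

end

theory Submission
  imports Defs
begin

lemma lin_rmul: "linear (\<lambda>X::real^'n^'n. X ** Y)"
  by (auto intro!: linearI simp: vec_eq_iff matrix_matrix_mult_def sum.distrib sum_distrib_left algebra_simps)

lemma bl_rmul: "bounded_linear (\<lambda>X::real^'n^'n. X ** Y)"
  using lin_rmul linear_conv_bounded_linear by blast

definition RS :: "(real \<Rightarrow> real^'n^'n) \<Rightarrow> (real \<Rightarrow> real^'n^'n) \<Rightarrow> (real \<times> real set) set \<Rightarrow> real^'n^'n" where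
  "RS A F p = (\<Sum>(x,K)\<in>p. (A (Sup K) - A (Inf K)) ** F x)"

lemma join:
  fixes a b c :: real
  assumes p1: "p1 tagged_division_of {a..b}" and p2: "p2 tagged_division_of {b..c}"
    and "a \<le> b" "b \<le> c"
  shows "p1 \<union> p2 tagged_division_of {a..c}" "RS A F (p1 \<union> p2) = RS A F p1 + RS A F p2"
proof -
  have "p1 \<union> p2 tagged_division_of ({a..b} \<union> {b..c})"
    by (rule tagged_division_Un[OF p1 p2]) auto
  moreover have "{a..b} \<union> {b..c} = {a..c}" using assms by auto
  ultimately show "p1 \<union> p2 tagged_division_of {a..c}" by simp
  have z: "(\<lambda>(x,K). (A (Sup K) - A (Inf K)) ** F x) xK = 0" if "xK \<in> p1 \<inter> p2" for xK
  proof -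
    obtain x K where xK: "xK = (x,K)" by fastforce
    have i1: "(x,K) \<in> p1" "(x,K) \<in> p2" using that xK by auto
    have "x \<in> K" "K \<subseteq> {a..b}" "K \<subseteq> {b..c}"
      using tagged_division_ofD(2)[OF p1 i1(1)] tagged_division_ofD(3)[OF p1 i1(1)] tagged_division_ofD(3)[OF p2 i1(2)] by auto
    then have "K \<subseteq> {b}" by fastforce
    with \<open>x \<in> K\<close> have "K = {b}" by blast
    then show ?thesis using xK by simp
  qed
  show "RS A F (p1 \<union> p2) = RS A F p1 + RS A F p2"
    unfolding RS_def
    by (rule sum.union_inter_neutral) (use z tagged_division_ofD(1)[OF p1] tagged_division_ofD(1)[OF p2] in auto)
qed

lemma norm4: "norm ((a::'a::real_normed_vector) - b + c - d) \<le> norm a + norm b + norm c + norm d"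
proof -
  have "norm (a - b + c - d) \<le> norm (a - b + c) + norm d" by (rule norm_triangle_ineq4)
  moreover have "norm (a - b + c) \<le> norm (a - b) + norm c" by (rule norm_triangle_ineq)
  moreover have "norm (a - b) \<le> norm a + norm b" by (rule norm_triangle_ineq4)
  ultimately show ?thesis by linarith
qed

lemma n3a: "a = b + c - d \<Longrightarrow> norm (a::'a::real_normed_vector) \<le> norm b + norm c + norm d"
proof -
  assume a: "a = b + c - d"
  have "norm (b + c - d) \<le> norm (b + c) + norm d" by (rule norm_triangle_ineq4)
  moreover have "norm (b + c) \<le> norm b + norm c" by (rule norm_triangle_ineq)
  ultimately show ?thesis unfolding a by linarith
qed

lemma n3b: "a = b - c + d \<Longrightarrow> norm (a::'a::real_normed_vector) \<le> norm b + norm c + norm d"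
proof -
  assume a: "a = b - c + d"
  have "norm (b - c + d) \<le> norm (b - c) + norm d" by (rule norm_triangle_ineq)
  moreover have "norm (b - c) \<le> norm b + norm c" by (rule norm_triangle_ineq4)
  ultimately show ?thesis unfolding a by linarith
qed

lemma sh:
  fixes A F :: "real \<Rightarrow> real^'n^'n" and G :: "real \<Rightarrow> real^'n^'n"
  assumes int: "\<And>t. t \<in> {s..T} \<Longrightarrow> ks_has_integral_on A F (G t) s t"
    and g: "gauge \<gamma>"
    and gf: "\<And>p. p tagged_division_of {s..T} \<Longrightarrow> \<gamma> fine p \<Longrightarrow> norm (RS A F p - G T) < e"
    and uv: "s \<le> u" "u < v" "v \<le> T" and x: "x \<in> {u..v}" and sub: "{u..v} \<subseteq> \<gamma> x"
  shows "norm ((A v - A u) ** F x - (G v - G u)) \<le> 2*e"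
proof (rule field_le_epsilon)
  fix \<eta> :: real assume "\<eta> > 0"
  have iu: "ks_has_integral_on A F (G u) s u" and iv: "ks_has_integral_on A F (G v) s v"
    using int uv by auto
  have h\<eta>: "\<eta>/2 > 0" using \<open>\<eta> > 0\<close> by simp
  have allu: "\<forall>e>0. \<exists>\<gamma>. gauge \<gamma> \<and> (\<forall>p. p tagged_division_of {s..u} \<and> \<gamma> fine p \<longrightarrow> norm (RS A F p - G u) < e)"
    using iu unfolding ks_has_integral_on_def RS_def .
  obtain gu where gu0: "gauge gu" and gu1: "\<forall>p. p tagged_division_of {s..u} \<and> gu fine p \<longrightarrow> norm (RS A F p - G u) < \<eta>/2"
    using allu[rule_format, OF h\<eta>] by (elim exE conjE)
  note gu = gu0 gu1[rule_format, OF conjI]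
  have allv: "\<forall>e>0. \<exists>\<gamma>. gauge \<gamma> \<and> (\<forall>p. p tagged_division_of {s..v} \<and> \<gamma> fine p \<longrightarrow> norm (RS A F p - G v) < e)"
    using iv unfolding ks_has_integral_on_def RS_def .
  obtain gv where gv0: "gauge gv" and gv1: "\<forall>p. p tagged_division_of {s..v} \<and> gv fine p \<longrightarrow> norm (RS A F p - G v) < \<eta>/2"
    using allv[rule_format, OF h\<eta>] by (elim exE conjE)
  note gv = gv0 gv1[rule_format, OF conjI]
  obtain p1 where p1: "p1 tagged_division_of {s..u}" "(\<lambda>y. \<gamma> y \<inter> gu y) fine p1"
    using fine_division_exists_real gauge_Int[OF g gu(1)] by blast
  obtain q where q: "q tagged_division_of {s..v}" "(\<lambda>y. \<gamma> y \<inter> gv y) fine q"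
    using fine_division_exists_real gauge_Int[OF g gv(1)] by blast
  obtain p2 where p2: "p2 tagged_division_of {v..T}" "\<gamma> fine p2"
    using fine_division_exists_real g by blast
  have m: "{(x,{u..v})} tagged_division_of {u..v}" using x by (rule tagged_division_of_self_real)
  have mf: "\<gamma> fine {(x,{u..v})}" using sub by (auto simp: fine_def)
  have RSm: "RS A F {(x,{u..v})} = (A v - A u) ** F x" using uv by (simp add: RS_def)
  have le1: "s \<le> u" "u \<le> v" "v \<le> T" "s \<le> v" using uv by auto
  note J1 = join[OF p1(1) m le1(1,2)]
  have j1: "p1 \<union> {(x,{u..v})} tagged_division_of {s..v}" "RS A F (p1 \<union> {(x,{u..v})}) = RS A F p1 + (A v - A u) ** F x"
    using J1(1) apply assumption
    using J1(2) RSm by metis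
  note J2 = join[OF j1(1) p2(1) le1(4,3)]
  have j2: "(p1 \<union> {(x,{u..v})}) \<union> p2 tagged_division_of {s..T}" "RS A F ((p1 \<union> {(x,{u..v})}) \<union> p2) = RS A F p1 + (A v - A u) ** F x + RS A F p2"
    using J2(1) apply assumption
    using J2(2) j1(2) by metis
  note J3 = join[OF q(1) p2(1) le1(4,3)]
  have j3: "q \<union> p2 tagged_division_of {s..T}" "RS A F (q \<union> p2) = RS A F q + RS A F p2"
    using J3(1) apply assumption
    using J3(2) by metis
  have p1f: "\<gamma> fine p1" "gu fine p1" using p1(2)[unfolded fine_Int] by blast+
  have qf: "\<gamma> fine q" "gv fine q" using q(2)[unfolded fine_Int] by blast+
  have f1: "\<gamma> fine ((p1 \<union> {(x,{u..v})}) \<union> p2)"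
    by (rule fine_Un[OF fine_Un[OF p1f(1) mf] p2(2)])
  have f3: "\<gamma> fine (q \<union> p2)" by (rule fine_Un[OF qf(1) p2(2)])
  have e1: "norm (RS A F p1 - G u) < \<eta>/2" by (rule gu(2)[OF p1(1) p1f(2)])
  have e2: "norm (RS A F q - G v) < \<eta>/2" by (rule gv(2)[OF q(1) qf(2)])
  have e3: "norm (RS A F p1 + (A v - A u) ** F x + RS A F p2 - G T) < e" using gf[OF j2(1) f1] unfolding j2(2) .
  have e4: "norm (RS A F q + RS A F p2 - G T) < e" using gf[OF j3(1) f3] unfolding j3(2) .
  have eqX: "(A v - A u) ** F x - (G v - G u) =
     (RS A F p1 + (A v - A u) ** F x + RS A F p2 - G T) - (RS A F q + RS A F p2 - G T)
     + (RS A F q - G v) - (RS A F p1 - G u)" by (simp add: algebra_simps)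
  have "norm ((A v - A u) ** F x - (G v - G u)) \<le> norm (RS A F p1 + (A v - A u) ** F x + RS A F p2 - G T) + norm (RS A F q + RS A F p2 - G T)
     + norm (RS A F q - G v) + norm (RS A F p1 - G u)"
    unfolding eqX by (rule norm4)
  then show "norm ((A v - A u) ** F x - (G v - G u)) \<le> 2*e + \<eta>"
    using e1 e2 e3 e4 by linarith
qed

lemma A_bdd:
  fixes A :: "real \<Rightarrow> 'a::real_normed_vector"
  assumes "bv_on A 0 b"
  shows "\<exists>M. \<forall>t\<in>{0..b}. norm (A t) \<le> M"
proof -
  obtain B where B: "\<And>d. d division_of {0..b} \<Longrightarrow> (\<Sum>K\<in>d. norm (A (Sup K) - A (Inf K))) \<le> B"
    using assms unfolding bv_on_def by blast
  show ?thesis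
  proof (intro exI ballI)
    fix t assume t: "t \<in> {0..b}"
    let ?d = "{{0..t},{t..b}}"
    have "{{0..t}} \<union> {{t..b}} division_of {0..t} \<union> {t..b}"
      by (rule division_disjoint_union[OF division_of_self[of 0 t, unfolded box_real] division_of_self[of t b, unfolded box_real]])
         (use t in auto)
    moreover have "{0..t} \<union> {t..b} = {0..b}" using t by auto
    ultimately have d: "?d division_of {0..b}" by (simp add: insert_commute)
    have "norm (A (Sup {0..t}) - A (Inf {0..t})) \<le> (\<Sum>K\<in>?d. norm (A (Sup K) - A (Inf K)))"
      by (rule member_le_sum) auto
    also have "\<dots> \<le> B" by (rule B[OF d])
    finally have "norm (A t - A 0) \<le> B" using t by simp
    then show "norm (A t) \<le> norm (A 0) + B"
      using norm_triangle_sub[of "A t" "A 0"] by linarith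
  qed
qed

lemma G_bdd:
  fixes A F G :: "real \<Rightarrow> real^'n^'n"
  assumes int: "\<And>t. t \<in> {s..T} \<Longrightarrow> ks_has_integral_on A F (G t) s t" and sT: "s \<le> T"
    and M: "\<And>t. t \<in> {s..T} \<Longrightarrow> norm (A t) \<le> M"
  shows "\<exists>K. \<forall>t\<in>{s..T}. norm (G t) \<le> K"
proof -
  have "ks_has_integral_on A F (G T) s T" using int sT by auto
  then have allT: "\<forall>e>0. \<exists>\<gamma>. gauge \<gamma> \<and> (\<forall>p. p tagged_division_of {s..T} \<and> \<gamma> fine p \<longrightarrow> norm (RS A F p - G T) < e)"
    unfolding ks_has_integral_on_def RS_def .
  obtain \<gamma> where g: "gauge \<gamma>" and gf0: "\<forall>p. p tagged_division_of {s..T} \<and> \<gamma> fine p \<longrightarrow> norm (RS A F p - G T) < 1"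
    using allT[rule_format, OF zero_less_one] by (elim exE conjE)
  note gf = gf0[rule_format, OF conjI]
  have M0: "0 \<le> M" using M[of s] sT by (meson atLeastAtMost_iff norm_ge_zero order_refl order_trans)
  have "\<forall>x. \<exists>r>0. ball x r \<subseteq> \<gamma> x" using g unfolding gauge_def by (meson open_contains_ball)
  then obtain r where r: "\<And>x. r x > 0" "\<And>x. ball x (r x) \<subseteq> \<gamma> x" by metis
  have "\<forall>x. \<exists>K. \<forall>X::real^'n^'n. norm (X ** F x) \<le> norm X * K" 
  proof
    fix x show "\<exists>K. \<forall>X::real^'n^'n. norm (X ** F x) \<le> norm X * K" using bounded_linear.bounded[OF bl_rmul[of "F x"]] by blast
  qed
  then obtain KF where KF: "\<And>x (X::real^'n^'n). norm (X ** F x) \<le> norm X * KF x" by metis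
  define bd where "bd x = norm (G x) + 2 * M * \<bar>KF x\<bar> + 2" for x
  have bd0: "bd x \<ge> 0" for x unfolding bd_def using M0 by simp
  have loc: "norm (G t) \<le> bd x" if x: "x \<in> {s..T}" and t: "t \<in> {s..T}" and tb: "t \<in> ball x (r x)" for x t
  proof -
    have AA: "norm ((A a - A b) ** F x) \<le> 2 * M * \<bar>KF x\<bar>" if "a \<in> {s..T}" "b \<in> {s..T}" for a b
    proof -
      have "norm ((A a - A b) ** F x) \<le> norm (A a - A b) * KF x" by (rule KF)
      also have "\<dots> \<le> norm (A a - A b) * \<bar>KF x\<bar>" by (simp add: mult_left_mono)
      also have "\<dots> \<le> (2 * M) * \<bar>KF x\<bar>"
      proof (rule mult_right_mono)
        show "norm (A a - A b) \<le> 2 * M"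
          using M[OF that(1)] M[OF that(2)] norm_triangle_ineq4[of "A a" "A b"] by linarith
      qed simp
      finally show ?thesis by simp
    qed
    consider "t = x" | "x < t" | "t < x" by linarith
    then show ?thesis
    proof cases
      case 1 then show ?thesis using M0 by (simp add: bd_def)
    next
      case 2
      have sub: "{x..t} \<subseteq> \<gamma> x"
      proof
        fix y assume "y \<in> {x..t}"
        then have "dist x y < r x" using tb 2 by (auto simp: dist_real_def)
        then show "y \<in> \<gamma> x" using r(2)[of x] by auto
      qed
      have h: "norm ((A t - A x) ** F x - (G t - G x)) \<le> 2 * 1"
        by (rule sh[OF int g gf]) (use x t 2 sub in auto)
      have "G t = G x + (A t - A x) ** F x - ((A t - A x) ** F x - (G t - G x))" by simp
      then have "norm (G t) \<le> norm (G x) + norm ((A t - A x) ** F x) + norm ((A t - A x) ** F x - (G t - G x))"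
        by (rule n3a)
      then show ?thesis using h AA[OF t x] unfolding bd_def by linarith
    next
      case 3
      have sub: "{t..x} \<subseteq> \<gamma> x"
      proof
        fix y assume "y \<in> {t..x}"
        then have "dist x y < r x" using tb 3 by (auto simp: dist_real_def)
        then show "y \<in> \<gamma> x" using r(2)[of x] by auto
      qed
      have h: "norm ((A x - A t) ** F x - (G x - G t)) \<le> 2 * 1"
        by (rule sh[OF int g gf]) (use x t 3 sub in auto)
      have "G t = G x - (A x - A t) ** F x + ((A x - A t) ** F x - (G x - G t))" by simp
      then have "norm (G t) \<le> norm (G x) + norm ((A x - A t) ** F x) + norm ((A x - A t) ** F x - (G x - G t))"
        by (rule n3b)
      then show ?thesis using h AA[OF x t] unfolding bd_def by linarith
    qed
  qed
  obtain D where D: "D \<subseteq> {s..T}" "finite D" "{s..T} \<subseteq> (\<Union>x\<in>D. ball x (r x))"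
    by (rule compactE_image[of "{s..T}" "{s..T}" "\<lambda>x. ball x (r x)"]) (use r(1) in auto)
  show ?thesis
  proof (intro exI ballI)
    fix t assume t: "t \<in> {s..T}"
    then obtain x where x: "x \<in> D" "t \<in> ball x (r x)" using D(3) by blast
    have "norm (G t) \<le> bd x" using loc[OF _ t x(2)] x(1) D(1) by blast
    also have "\<dots> \<le> sum bd D" by (rule member_le_sum) (use x D bd0 in auto)
    finally show "norm (G t) \<le> sum bd D" .
  qed
qed

lemma entry_axis: "((M::real^'n^'m) *v axis j 1) $ i = M $ i $ j"
  by (simp add: matrix_vector_mult_def axis_def if_distrib cong: if_cong)

lemma onorm_le_norm: "onorm ((*v) (M::real^'n^'n)) \<le> (\<Sum>i\<in>(UNIV::'n set). \<Sum>j\<in>(UNIV::'n set). norm M)"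
proof -
  have "onorm ((*v) M) \<le> (\<Sum>i\<in>UNIV. \<Sum>j\<in>UNIV. \<bar>M $ i $ j\<bar>)" by (rule onorm_le_matrix_component_sum)
  also have "\<dots> \<le> (\<Sum>i\<in>(UNIV::'n set). \<Sum>j\<in>(UNIV::'n set). norm M)"
  proof (intro sum_mono)
    fix i j
    have "\<bar>M $ i $ j\<bar> \<le> norm (M $ i)" by (metis component_le_norm_cart)
    also have "\<dots> \<le> norm M" by (rule Finite_Cartesian_Product.norm_nth_le)
    finally show "\<bar>M $ i $ j\<bar> \<le> norm M" .
  qed
  finally show ?thesis .
qed

theorem theorem3p6:
  fixes A :: "real \<Rightarrow> real^'n^'n" and U :: "real \<Rightarrow> real \<Rightarrow> real^'n^'n"
  assumes "loc_bv_J A"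
    and "\<forall>t>0. invertible (mat 1 - jump_minus A t)"
    and "\<forall>t\<ge>0. invertible (mat 1 + jump_plus A t)"
    and "transition_matrix A U"
  shows "trivial_GAS U \<longleftrightarrow>
           (\<forall>s0\<ge>0. ((\<lambda>t. onorm (\<lambda>x. U t s0 *v x)) \<longlongrightarrow> 0) at_top)"
proof
  assume G: "trivial_GAS U"
  show "\<forall>s0\<ge>0. ((\<lambda>t. onorm (\<lambda>x. U t s0 *v x)) \<longlongrightarrow> 0) at_top"
  proof (intro allI impI)
    fix s0 :: real assume "s0 \<ge> 0"
    then have lim: "((\<lambda>t. norm (U t s0 *v x0)) \<longlongrightarrow> 0) at_top" for x0
      using G unfolding trivial_GAS_def sol_def by blast
    have ent: "((\<lambda>t. \<bar>U t s0 $ i $ j\<bar>) \<longlongrightarrow> 0) at_top" for i j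
    proof -
      have "((\<lambda>t. U t s0 *v axis j 1) \<longlongrightarrow> 0) at_top"
        using lim[of "axis j 1"] by (simp add: tendsto_norm_zero_iff)
      then have "((\<lambda>t. (U t s0 *v axis j 1) $ i) \<longlongrightarrow> 0 $ i) at_top" by (rule tendsto_vec_nth)
      then have "((\<lambda>t. U t s0 $ i $ j) \<longlongrightarrow> 0) at_top" by (simp add: entry_axis)
      then show ?thesis by (rule tendsto_rabs_zero)
    qed
    have "((\<lambda>t. \<Sum>i\<in>UNIV. \<Sum>j\<in>UNIV. \<bar>U t s0 $ i $ j\<bar>) \<longlongrightarrow> (\<Sum>i\<in>(UNIV::'n set). \<Sum>j\<in>(UNIV::'n set). 0)) at_top"
      by (intro tendsto_sum ent)
    then have S: "((\<lambda>t. \<Sum>i\<in>UNIV. \<Sum>j\<in>UNIV. \<bar>U t s0 $ i $ j\<bar>) \<longlongrightarrow> 0) at_top" by simp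
    show "((\<lambda>t. onorm (\<lambda>x. U t s0 *v x)) \<longlongrightarrow> 0) at_top"
    proof (rule Lim_null_comparison[OF _ S], intro always_eventually allI)
      fix t
      have "0 \<le> onorm ((*v) (U t s0))" by (rule onorm_pos_le[OF matrix_vector_mul_bounded_linear])
      then show "norm (onorm (\<lambda>x. U t s0 *v x)) \<le> (\<Sum>i\<in>UNIV. \<Sum>j\<in>UNIV. \<bar>U t s0 $ i $ j\<bar>)"
        using onorm_le_matrix_component_sum[of "U t s0"] by simp
    qed
  qed
next
  assume L: "\<forall>s0\<ge>0. ((\<lambda>t. onorm (\<lambda>x. U t s0 *v x)) \<longlongrightarrow> 0) at_top"
  have ineq: "norm (U t s0 *v x0) \<le> onorm (\<lambda>x. U t s0 *v x) * norm x0" for t s0 x0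
    by (rule onorm[OF matrix_vector_mul_bounded_linear])
  have U_bdd: "\<exists>K. \<forall>t\<in>{s..T}. norm (U t s) \<le> K" if s: "0 \<le> s" "s \<le> T" for s T
  proof -
    obtain M where M: "\<forall>t\<in>{0..T}. norm (A t) \<le> M"
      using A_bdd[of A T] assms(1) s unfolding loc_bv_J_def by auto
    have int: "ks_has_integral_on A (\<lambda>r. U r s) (U t s - mat 1) s t" if "t \<in> {s..T}" for t
      using assms(4) that s unfolding transition_matrix_def ks_has_integral_def by auto
    obtain K where K: "\<forall>t\<in>{s..T}. norm (U t s - mat 1) \<le> K"
      using G_bdd[of s T A "\<lambda>r. U r s" "\<lambda>t. U t s - mat 1" M, OF int s(2)] M s by auto
    show ?thesis
    proof (intro exI ballI)
      fix t assume "t \<in> {s..T}"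
      then have "norm (U t s - mat 1) \<le> K" using K by blast
      then show "norm (U t s) \<le> K + norm (mat 1 :: real^'n^'n)"
        using norm_triangle_sub[of "U t s" "mat 1"] by linarith
    qed
  qed
  show "trivial_GAS U"
    unfolding trivial_GAS_def
  proof (intro conjI allI impI)
    fix s0 :: real and x0 :: "real^'n" assume s0: "s0 \<ge> 0"
    have "((\<lambda>t. onorm (\<lambda>x. U t s0 *v x) * norm x0) \<longlongrightarrow> 0 * norm x0) at_top"
      using L s0 by (intro tendsto_mult tendsto_const) auto
    then have g0: "((\<lambda>t. onorm (\<lambda>x. U t s0 *v x) * norm x0) \<longlongrightarrow> 0) at_top" by simp
    have ev: "\<forall>\<^sub>F t in at_top. norm (norm (U t s0 *v x0)) \<le> onorm (\<lambda>x. U t s0 *v x) * norm x0"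
      using ineq by simp
    show "((\<lambda>t. norm (sol U t s0 x0)) \<longlongrightarrow> 0) at_top"
      unfolding sol_def by (rule Lim_null_comparison[OF ev g0])
  next
    show "trivial_stable U"
      unfolding trivial_stable_def
    proof (intro allI impI)
      fix s0 \<epsilon> :: real assume s0: "s0 \<ge> 0" and e: "\<epsilon> > 0"
      have "\<forall>\<^sub>F t in at_top. onorm (\<lambda>x. U t s0 *v x) < 1"
        using L s0 by (intro order_tendstoD) auto
      then obtain N where N: "\<And>t. t \<ge> N \<Longrightarrow> onorm (\<lambda>x. U t s0 *v x) < 1"
        by (auto simp: eventually_at_top_linorder)
      obtain K where K: "\<forall>t\<in>{s0..max s0 N}. norm (U t s0) \<le> K"
        using U_bdd[of s0 "max s0 N"] s0 by auto
      define C where "C = (\<Sum>i\<in>(UNIV::'n set). \<Sum>j\<in>(UNIV::'n set). \<bar>K\<bar>)"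
      define L where "L = 1 + C"
      have C0: "C \<ge> 0" unfolding C_def by simp
      have Lpos: "L > 0" unfolding L_def using C0 by simp
      have bnd: "onorm (\<lambda>x. U t s0 *v x) \<le> L" if "t \<ge> s0" for t
      proof (cases "t \<ge> N")
        case True then show ?thesis using N[of t] C0 unfolding L_def by simp
      next
        case False
        then have "norm (U t s0) \<le> K" using K that by auto
        then have "(\<Sum>i\<in>(UNIV::'n set). \<Sum>j\<in>(UNIV::'n set). norm (U t s0)) \<le> C"
          unfolding C_def by (intro sum_mono) auto
        then show ?thesis using onorm_le_norm[of "U t s0"] unfolding L_def by simp
      qed
      show "\<exists>\<delta>>0. \<forall>x0. norm x0 < \<delta> \<longrightarrow> (\<forall>t\<ge>s0. norm (sol U t s0 x0) < \<epsilon>)"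
      proof (intro exI conjI allI impI)
        show "\<epsilon> / L > 0" using e Lpos by simp
        fix x0 :: "real^'n" and t assume x0: "norm x0 < \<epsilon> / L" and t: "t \<ge> s0"
        have "norm (sol U t s0 x0) \<le> onorm (\<lambda>x. U t s0 *v x) * norm x0" unfolding sol_def by (rule ineq)
        also have "\<dots> \<le> L * norm x0" by (rule mult_right_mono[OF bnd[OF t]]) simp
        also have "\<dots> < L * (\<epsilon> / L)" using x0 Lpos by (rule mult_strict_left_mono)
        also have "\<dots> = \<epsilon>" using Lpos by simp
        finally show "norm (sol U t s0 x0) < \<epsilon>" .
      qed
    qed
  qed
qed

end
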